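(* Let $\beta\in\mathbb{Z}[\mathrm{i}]$ with $|\beta|>1$, let $(\beta,D)$ be an integral numeration system and let $D'\subset\mathbb{Z}[\mathrm{i}]$ be a finite set with $D\subseteq D'$. Then a configuration $(a_z)_{z\in\mathbb{Z}[\mathrm{i}]}$ is $(\beta,D)$-automatic if and only if it is $(\beta,D')$-automatic, i.e. generated by a DFAO with input alphabet $D'$ that is consistent (any two words over $D'$ with the same value $[\cdot]_\beta$ give the same output).
   Context: For $\gamma\in\mathbb{Z}[\mathrm{i}]$ with $|\gamma|>1$ and a finite $D\subset\mathbb{Z}[\mathrm{i}]$ with $0\in D$, a word $w=w_{n-1}\cdots w_0\in D^*$ has value $[w]_\gamma=\sum_{j=0}^{n-1}w_j\gamma^j$; $w$ is a $(\gamma,D)$-expansion of $z$ if $[w]_\gamma=z$. $(\gamma,D)$ is an integral numeration system if every Gaussian integer has a unique $(\gamma,D)$-expansion (up to leading zeros). A DFAO $(S,D,\delta,s_0,A,\tau)$ has finite state set $S$, input alphabet $D$, transition map $\delta:S\times D\to S$ extended to words by $\delta(s,wa)=\delta(\delta(s,w),a)$, initial state $s_0$, output map $\tau:S\to A$. If every $z\in\mathbb{Z}[\mathrm{i}]$ has at least one $(\gamma,D)$-expansion, a configuration $(a_z)$ (map from $\mathbb{Z}[\mathrm{i}]$ to a finite set) is $(\gamma,D)$-automatic if there is a DFAO with input alphabet $D$ such that $a_z=\tau(\delta(s_0,w))$ for every $w\in D^*$ with $[w]_\gamma=z$. *)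

theory Defs
  imports Complex_Main
begin

definition gint :: "complex \<Rightarrow> bool" where
  "gint z \<longleftrightarrow> Re z \<in> \<int> \<and> Im z \<in> \<int>"

text \<open>A word w = w_{n-1} ... w_0 is the list [w_{n-1}, ..., w_0] (reading order);
its value is sum_j w_j gamma^j.\<close>
definition wval :: "complex \<Rightarrow> complex list \<Rightarrow> complex" where
  "wval \<gamma> w = foldl (\<lambda>acc d. acc * \<gamma> + d) 0 w"

definition numeration_base :: "complex \<Rightarrow> complex set \<Rightarrow> bool" where
  "numeration_base \<gamma> D \<longleftrightarrow> gint \<gamma> \<and> cmod \<gamma> > 1 \<and> finite D \<and> D \<subseteq> {z. gint z} \<and> 0 \<in> D"

definition has_expansions :: "complex \<Rightarrow> complex set \<Rightarrow> bool" where
  "has_expansions \<gamma> D \<longleftrightarrow> (\<forall>z. gint z \<longrightarrow> (\<exists>w\<in>lists D. wval \<gamma> w = z))"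

definition integral_numeration_system :: "complex \<Rightarrow> complex set \<Rightarrow> bool" where
  "integral_numeration_system \<gamma> D \<longleftrightarrow> numeration_base \<gamma> D \<and> has_expansions \<gamma> D \<and>
     (\<forall>w\<in>lists D. \<forall>v\<in>lists D. wval \<gamma> w = wval \<gamma> v \<longrightarrow>
        dropWhile (\<lambda>d. d = 0) w = dropWhile (\<lambda>d. d = 0) v)"

text \<open>Words are read left to
right, delta(s, w a) = delta(delta(s, w), a), i.e. foldl.\<close>
definition is_dfao :: "nat set \<Rightarrow> complex set \<Rightarrow> (nat \<Rightarrow> complex \<Rightarrow> nat) \<Rightarrow> nat \<Rightarrow> bool" where
  "is_dfao S D \<delta> s0 \<longleftrightarrow> finite S \<and> s0 \<in> S \<and> (\<forall>s\<in>S. \<forall>d\<in>D. \<delta> s d \<in> S)"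

definition automatic :: "complex \<Rightarrow> complex set \<Rightarrow> (complex \<Rightarrow> 'a) \<Rightarrow> bool" where
  "automatic \<gamma> D a \<longleftrightarrow> has_expansions \<gamma> D \<and>
     (\<exists>S \<delta> s0 (\<tau> :: nat \<Rightarrow> 'a). is_dfao S D \<delta> s0 \<and>
        (\<forall>w\<in>lists D. a (wval \<gamma> w) = \<tau> (foldl \<delta> s0 w)))"

end

theory Submission
  imports Defs
begin

lemma foldl_wval_gen:
  fixes b c :: complex
  shows "foldl (\<lambda>acc d. acc * b + d) c y = c * b ^ length y + foldl (\<lambda>acc d. acc * b + d) 0 y"
proof (induction y arbitrary: c)
  case Nil then show ?case by simp
next
  case (Cons a y)
  have h1: "foldl (\<lambda>acc d. acc * b + d) c (a # y) = (c * b + a) * b ^ length y + foldl (\<lambda>acc d. acc * b + d) 0 y"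
    using Cons.IH[of "c * b + a"] by simp
  have h2: "foldl (\<lambda>acc d. acc * b + d) 0 (a # y) = a * b ^ length y + foldl (\<lambda>acc d. acc * b + d) 0 y"
    using Cons.IH[of a] by simp
  show ?case unfolding h1 h2 by (simp add: algebra_simps)
qed

lemma wval_append: "wval b (x @ y) = wval b x * b ^ length y + wval b y"
  unfolding wval_def foldl_append by (rule foldl_wval_gen)

lemma wval_snoc: "wval b (x @ [d]) = wval b x * b + d"
  unfolding wval_def by simp

lemma wval_Nil[simp]: "wval b [] = 0"
  unfolding wval_def by simp

lemma wval_replicate0: "wval b (replicate k 0) = 0"
  unfolding wval_def by (induction k) auto

lemma wval_zeros: "wval b (replicate k 0 @ v) = wval b v"
  by (simp add: wval_append wval_replicate0)

lemma gint_add: "gint x \<Longrightarrow> gint y \<Longrightarrow> gint (x + y)"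
  by (auto simp: gint_def)
lemma gint_diff: "gint x \<Longrightarrow> gint y \<Longrightarrow> gint (x - y)"
  by (auto simp: gint_def)
lemma gint_mult: "gint x \<Longrightarrow> gint y \<Longrightarrow> gint (x * y)"
  by (auto simp: gint_def)
lemma gint_0: "gint 0" by (simp add: gint_def)

lemma gint_wval: "gint b \<Longrightarrow> set w \<subseteq> {z. gint z} \<Longrightarrow> gint (wval b w)"
  by (induction w rule: rev_induct) (auto simp: wval_snoc gint_0 gint_add gint_mult)

lemma wval_norm:
  assumes "cmod b \<ge> 1" "set w \<subseteq> {d. cmod d \<le> M}"
  shows "cmod (wval b w) * (cmod b - 1) \<le> M * (cmod b ^ length w - 1)"
  using assms(2)
proof (induction w rule: rev_induct)
  case Nil then show ?case by simp
next
  case (snoc d x)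
  let ?q = "cmod b"
  have ih: "cmod (wval b x) * (?q - 1) \<le> M * (?q ^ length x - 1)" using snoc by auto
  have dM: "cmod d \<le> M" using snoc by auto
  have "cmod (wval b (x @ [d])) \<le> cmod (wval b x) * ?q + M"
    unfolding wval_snoc by (metis add_mono dM norm_mult norm_triangle_ineq order_trans order_refl)
  then have "cmod (wval b (x @ [d])) * (?q - 1) \<le> (cmod (wval b x) * ?q + M) * (?q - 1)"
    using assms(1) by (simp add: mult_right_mono)
  also have "\<dots> = ?q * (cmod (wval b x) * (?q - 1)) + M * (?q - 1)" by (simp add: algebra_simps)
  also have "\<dots> \<le> ?q * (M * (?q ^ length x - 1)) + M * (?q - 1)"
    using ih assms(1) by (simp add: mult_left_mono)
  also have "\<dots> = M * (?q ^ length (x @ [d]) - 1)" by (simp add: algebra_simps)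
  finally show ?case .
qed

lemma prefix_diff_bound:
  assumes q: "cmod b > 1" and s: "set s \<subseteq> {d. cmod d \<le> M}" and s': "set s' \<subseteq> {d. cmod d \<le> M}"
    and len: "length s = length s'" and M0: "M \<ge> 0" and eq: "wval b (p @ s) = wval b (p' @ s')"
  shows "cmod (wval b p - wval b p') * (cmod b - 1) \<le> 2 * M"
proof -
  let ?q = "cmod b" and ?m = "length s"
  have "(wval b p - wval b p') * b ^ ?m = wval b s' - wval b s"
    using eq len by (simp add: wval_append algebra_simps)
  then have "cmod (wval b p - wval b p') * ?q ^ ?m = cmod (wval b s' - wval b s)"
    by (metis norm_mult norm_power)
  also have "\<dots> \<le> cmod (wval b s') + cmod (wval b s)" by (rule norm_triangle_ineq4)
  finally have A: "cmod (wval b p - wval b p') * ?q ^ ?m * (?q - 1) \<le> (cmod (wval b s') + cmod (wval b s)) * (?q - 1)"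
    using q by (simp add: mult_right_mono)
  have B1: "cmod (wval b s) * (?q - 1) \<le> M * (?q ^ ?m - 1)" using wval_norm[OF _ s] q by simp
  have B2: "cmod (wval b s') * (?q - 1) \<le> M * (?q ^ ?m - 1)" using wval_norm[OF _ s'] q len by simp
  have "M * (?q ^ ?m - 1) \<le> M * ?q ^ ?m" using M0 by (intro mult_left_mono) auto
  then have "cmod (wval b p - wval b p') * (?q - 1) * ?q ^ ?m \<le> (2 * M) * ?q ^ ?m"
    using A B1 B2 by (simp add: algebra_simps)
  moreover have "?q ^ ?m > 0" by (rule zero_less_power) (use q in linarith)
  ultimately show ?thesis by (rule mult_right_le_imp_le)
qed


lemma finite_gint_ball: "finite {c. gint c \<and> cmod c \<le> R}"
proof -
  let ?N = "\<lceil>R\<rceil>"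
  have "{c. gint c \<and> cmod c \<le> R} \<subseteq> (\<lambda>(x,y). Complex (of_int x) (of_int y)) ` ({-?N..?N} \<times> {-?N..?N})"
  proof
    fix c assume c: "c \<in> {c. gint c \<and> cmod c \<le> R}"
    then obtain x y where x: "Re c = of_int x" and y: "Im c = of_int y"
      by (auto simp: gint_def elim!: Ints_cases)
    have "\<bar>Re c\<bar> \<le> R" "\<bar>Im c\<bar> \<le> R" using c abs_Re_le_cmod[of c] abs_Im_le_cmod[of c] by auto
    then have "\<bar>x\<bar> \<le> ?N" "\<bar>y\<bar> \<le> ?N" using x y by (auto, linarith+)
    then have "(x, y) \<in> {-?N..?N} \<times> {-?N..?N}" by auto
    moreover have "c = Complex (of_int x) (of_int y)" using x y by (simp add: complex_eq_iff)
    ultimately show "c \<in> (\<lambda>(x,y). Complex (of_int x) (of_int y)) ` ({-?N..?N} \<times> {-?N..?N})" by force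
  qed
  then show ?thesis by (rule finite_subset) auto
qed

lemma hard_direction:
  fixes \<beta> :: complex and a :: "complex \<Rightarrow> 'a"
  assumes gb: "gint \<beta>" and q: "cmod \<beta> > 1" and fD: "finite D" and gD: "D \<subseteq> {z. gint z}"
    and D0: "0 \<in> D"
    and fD': "finite D'" and gD': "D' \<subseteq> {z. gint z}"
    and hexp: "has_expansions \<beta> D"
    and dfao: "is_dfao S D \<delta> s0"
    and corr: "\<forall>w\<in>lists D. a (wval \<beta> w) = \<tau> (foldl \<delta> s0 w)"
  shows "\<exists>SN \<delta>N s0N (\<tau>N :: nat \<Rightarrow> 'a). is_dfao SN D' \<delta>N s0N \<and>
           (\<forall>w\<in>lists D'. a (wval \<beta> w) = \<tau>N (foldl \<delta>N s0N w))"
proof -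
  define M where "M = (\<Sum>d\<in>D \<union> D'. cmod d)"
  have M0: "M \<ge> 0" unfolding M_def by (simp add: sum_nonneg)
  have MD: "cmod d \<le> M" if "d \<in> D \<union> D'" for d
    unfolding M_def using that fD fD' by (intro member_le_sum) auto
  define R where "R = 2 * M / (cmod \<beta> - 1)"
  define B where "B = {c. gint c \<and> cmod c \<le> R}"
  have fB: "finite B" unfolding B_def by (rule finite_gint_ball)
  define I0 where "I0 = {(foldl \<delta> s0 v, - wval \<beta> v) | v. v \<in> lists D \<and> - wval \<beta> v \<in> B}"
  define \<Delta> where "\<Delta> = (\<lambda>P d'. {(\<delta> s e, \<beta> * c + d' - e) | s c e. (s, c) \<in> P \<and> e \<in> D \<and> \<beta> * c + d' - e \<in> B})"
  have \<Delta>I: "(\<delta> s e, \<beta> * c + d - e) \<in> \<Delta> P d" if "(s, c) \<in> P" "e \<in> D" "\<beta> * c + d - e \<in> B" for s c e P d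
    unfolding \<Delta>_def using that by blast
  define \<tau>' where "\<tau>' = (\<lambda>P :: (nat \<times> complex) set. \<tau> (SOME s. (s, 0) \<in> P))"
  have dS: "\<delta> s e \<in> S" if "s \<in> S" "e \<in> D" for s e using dfao that by (auto simp: is_dfao_def)
  have fS: "finite S" and s0S: "s0 \<in> S" using dfao by (auto simp: is_dfao_def)
  have foldS: "foldl \<delta> s v \<in> S" if "s \<in> S" "v \<in> lists D" for s v
    using that by (induction v arbitrary: s) (auto intro: dS)
  define X where "X = Pow (S \<times> B)"
  have fX: "finite X" unfolding X_def using fS fB by simp
  have I0X: "I0 \<in> X" unfolding X_def I0_def using foldS s0S by auto
  have \<Delta>X: "\<Delta> P d \<in> X" if "P \<in> X" for P d
    using that unfolding X_def \<Delta>_def by (auto intro: dS)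
  have foldX: "foldl \<Delta> P u \<in> X" if "P \<in> X" for P u
    using that by (induction u arbitrary: P) (auto intro: \<Delta>X)
  have sound: "\<exists>v\<in>lists D. s = foldl \<delta> s0 v \<and> c = wval \<beta> u - wval \<beta> v"
    if "(s, c) \<in> foldl \<Delta> I0 u" for u s c
    using that
  proof (induction u arbitrary: s c rule: rev_induct)
    case Nil
    then show ?case unfolding I0_def by auto
  next
    case (snoc d u)
    from snoc.prems obtain s' c' e where s'c': "(s', c') \<in> foldl \<Delta> I0 u" and e: "e \<in> D"
      and s: "s = \<delta> s' e" and c: "c = \<beta> * c' + d - e"
      unfolding \<Delta>_def by auto
    from snoc.IH[OF s'c'] obtain v where v: "v \<in> lists D" "s' = foldl \<delta> s0 v" "c' = wval \<beta> u - wval \<beta> v"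
      by blast
    have c2: "c = \<beta> * (wval \<beta> u - wval \<beta> v) + d - e" using v(3) c by simp
    have "c = wval \<beta> (u @ [d]) - wval \<beta> (v @ [e])"
      unfolding c2 wval_snoc by (simp add: algebra_simps)
    then show ?case using v e s by (intro bexI[of _ "v @ [e]"]) auto
  qed
  have compl: "(foldl \<delta> s0 (v1 @ v2), wval \<beta> u - wval \<beta> (v1 @ v2)) \<in> foldl \<Delta> I0 u"
    if "v1 \<in> lists D" "v2 \<in> lists D" "length v2 = length u"
       "\<forall>j\<le>length u. wval \<beta> (take j u) - wval \<beta> (v1 @ take j v2) \<in> B" for u v1 v2
    using that
  proof (induction u arbitrary: v2 rule: rev_induct)
    case Nil
    then have "v2 = []" by simp
    with Nil show ?case unfolding I0_def by (auto dest: spec[of _ 0])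
  next
    case (snoc d u)
    obtain v2' e where v2: "v2 = v2' @ [e]" using snoc.prems(3)
      by (cases v2 rule: rev_exhaust) auto
    have lv: "length v2' = length u" using snoc.prems(3) v2 by simp
    have e: "e \<in> D" "v2' \<in> lists D" using snoc.prems(2) v2 by auto
    have hyp: "\<forall>j\<le>length u. wval \<beta> (take j u) - wval \<beta> (v1 @ take j v2') \<in> B"
    proof (intro allI impI)
      fix j assume j: "j \<le> length u"
      have "j \<le> length (u @ [d])" using j by simp
      then have "wval \<beta> (take j (u @ [d])) - wval \<beta> (v1 @ take j v2) \<in> B" using snoc.prems(4) by blast
      then show "wval \<beta> (take j u) - wval \<beta> (v1 @ take j v2') \<in> B" using j lv v2 by simp
    qed
    have IH: "(foldl \<delta> s0 (v1 @ v2'), wval \<beta> u - wval \<beta> (v1 @ v2')) \<in> foldl \<Delta> I0 u"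
      using snoc.IH[OF snoc.prems(1) e(2) lv hyp] .
    have last: "wval \<beta> (u @ [d]) - wval \<beta> (v1 @ v2) \<in> B"
      using snoc.prems(4)[rule_format, of "length (u @ [d])"] snoc.prems(3) by simp
    have eq: "\<beta> * (wval \<beta> u - wval \<beta> (v1 @ v2')) + d - e = wval \<beta> (u @ [d]) - wval \<beta> (v1 @ v2)"
      unfolding v2 append_assoc[symmetric] wval_snoc by (simp add: algebra_simps)
    have mem: "(\<delta> (foldl \<delta> s0 (v1 @ v2')) e, \<beta> * (wval \<beta> u - wval \<beta> (v1 @ v2')) + d - e)
        \<in> \<Delta> (foldl \<Delta> I0 u) d"
      using IH e(1) last[folded eq] by (rule \<Delta>I)
    have f1: "foldl \<delta> s0 (v1 @ v2) = \<delta> (foldl \<delta> s0 (v1 @ v2')) e" by (simp add: v2)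
    have f2: "foldl \<Delta> I0 (u @ [d]) = \<Delta> (foldl \<Delta> I0 u) d" by simp
    show ?case using mem unfolding f1 f2 eq .
  qed
  have ex0: "\<exists>s. (s, 0) \<in> foldl \<Delta> I0 u" if u: "u \<in> lists D'" for u
  proof -
    have "gint (wval \<beta> u)" using u gD' by (intro gint_wval gb) auto
    then obtain v where v: "v \<in> lists D" "wval \<beta> v = wval \<beta> u"
      using hexp unfolding has_expansions_def by blast
    define v' where "v' = replicate (length u) 0 @ v"
    have v': "v' \<in> lists D" "wval \<beta> v' = wval \<beta> u" "length v' \<ge> length u"
      using v D0 by (auto simp: v'_def wval_zeros)
    define k where "k = length v' - length u"
    define v1 where "v1 = take k v'"
    define v2 where "v2 = drop k v'"
    have vv: "v' = v1 @ v2" "length v2 = length u" "v1 \<in> lists D" "v2 \<in> lists D"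
      using v' by (auto simp: v1_def v2_def k_def dest: in_set_takeD in_set_dropD)
    have inB: "wval \<beta> (take j u) - wval \<beta> (v1 @ take j v2) \<in> B" if j: "j \<le> length u" for j
    proof -
      have g: "gint (wval \<beta> (take j u) - wval \<beta> (v1 @ take j v2))"
      proof -
        have "set (take j u) \<subseteq> {z. gint z}" using u gD' by (auto dest: in_set_takeD)
        moreover have "set (v1 @ take j v2) \<subseteq> {z. gint z}" using vv gD by (auto dest: in_set_takeD)
        ultimately show ?thesis by (intro gint_diff gint_wval[OF gb])
      qed
      have bnd: "cmod (wval \<beta> (take j u) - wval \<beta> (v1 @ take j v2)) * (cmod \<beta> - 1) \<le> 2 * M"
      proof (rule prefix_diff_bound[OF q _ _ _ M0])
        show "set (drop j u) \<subseteq> {d. cmod d \<le> M}" using u MD by (auto dest: in_set_dropD)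
        show "set (drop j v2) \<subseteq> {d. cmod d \<le> M}" using vv MD by (auto dest: in_set_dropD)
        show "length (drop j u) = length (drop j v2)" using vv by simp
        show "wval \<beta> (take j u @ drop j u) = wval \<beta> ((v1 @ take j v2) @ drop j v2)"
          using vv v' by simp
      qed
      then have "cmod (wval \<beta> (take j u) - wval \<beta> (v1 @ take j v2)) \<le> R"
        unfolding R_def using q by (simp add: pos_le_divide_eq)
      with g show ?thesis unfolding B_def by simp
    qed
    have "(foldl \<delta> s0 (v1 @ v2), wval \<beta> u - wval \<beta> (v1 @ v2)) \<in> foldl \<Delta> I0 u"
      by (rule compl) (use vv inB in auto)
    then show ?thesis using vv v' by auto
  qed
  have out: "a (wval \<beta> u) = \<tau>' (foldl \<Delta> I0 u)" if u: "u \<in> lists D'" for u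
  proof -
    let ?s = "SOME s. (s, 0) \<in> foldl \<Delta> I0 u"
    have "(?s, 0) \<in> foldl \<Delta> I0 u" using ex0[OF u] by (rule someI_ex)
    from sound[OF this] obtain v where v: "v \<in> lists D" "?s = foldl \<delta> s0 v" "0 = wval \<beta> u - wval \<beta> v"
      by blast
    have "wval \<beta> v = wval \<beta> u" using v(3) by simp
    then show ?thesis unfolding \<tau>'_def using corr v(1,2) by metis
  qed
  obtain f :: "(nat \<times> complex) set \<Rightarrow> nat" and n where f: "f ` X = {i. i < n}" "inj_on f X"
    using finite_imp_inj_to_nat_seg[OF fX] by blast
  define g where "g = inv_into X f"
  have gf: "g (f P) = P" if "P \<in> X" for P unfolding g_def using f(2) that by simp
  define \<delta>N where "\<delta>N = (\<lambda>i d. f (\<Delta> (g i) d))"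
  define \<tau>N where "\<tau>N = (\<lambda>i. \<tau>' (g i))"
  have foldN: "foldl \<delta>N (f P) u = f (foldl \<Delta> P u)" if "P \<in> X" for P u
    using that by (induction u arbitrary: P) (auto simp: \<delta>N_def gf intro: \<Delta>X)
  show ?thesis
  proof (intro exI conjI)
    show "is_dfao (f ` X) D' \<delta>N (f I0)"
      unfolding is_dfao_def using fX I0X by (auto simp: \<delta>N_def gf intro: \<Delta>X)
    show "\<forall>w\<in>lists D'. a (wval \<beta> w) = \<tau>N (foldl \<delta>N (f I0) w)"
      using out by (simp add: foldN[OF I0X] \<tau>N_def gf foldX[OF I0X])
  qed
qed

theorem proposition2p7:
  fixes \<beta> :: complex and D D' :: "complex set" and a :: "complex \<Rightarrow> 'a"
  assumes "gint \<beta>" and "cmod \<beta> > 1"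
    and "integral_numeration_system \<beta> D"
    and "finite D'" and "D' \<subseteq> {z. gint z}" and "D \<subseteq> D'"
    and "finite (a ` {z. gint z})"
  shows "automatic \<beta> D a \<longleftrightarrow> automatic \<beta> D' a"
proof -
  have nb: "numeration_base \<beta> D" and he: "has_expansions \<beta> D"
    using assms(3) unfolding integral_numeration_system_def by (meson conjunct1 conjunct2)+
  have lsub: "lists D \<subseteq> lists D'" using assms(6) by auto
  show ?thesis
  proof
    assume "automatic \<beta> D a"
    then obtain S \<delta> s0 and \<tau> :: "nat \<Rightarrow> 'a" where d: "is_dfao S D \<delta> s0"
      and c: "\<forall>w\<in>lists D. a (wval \<beta> w) = \<tau> (foldl \<delta> s0 w)"
      unfolding automatic_def by blast
    have he': "has_expansions \<beta> D'" using he lsub unfolding has_expansions_def by blast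
    have fD: "finite D" "D \<subseteq> {z. gint z}" "0 \<in> D" using nb by (auto simp: numeration_base_def)
    obtain SN \<delta>N s0N and \<tau>N :: "nat \<Rightarrow> 'a" where "is_dfao SN D' \<delta>N s0N"
      "\<forall>w\<in>lists D'. a (wval \<beta> w) = \<tau>N (foldl \<delta>N s0N w)"
      using hard_direction[OF assms(1,2) fD assms(4,5) he d c] by blast
    then show "automatic \<beta> D' a"
      unfolding automatic_def using he' by (intro conjI exI) auto
  next
    assume "automatic \<beta> D' a"
    then obtain S \<delta> s0 and \<tau> :: "nat \<Rightarrow> 'a" where d: "is_dfao S D' \<delta> s0"
      and c: "\<forall>w\<in>lists D'. a (wval \<beta> w) = \<tau> (foldl \<delta> s0 w)"
      unfolding automatic_def by blast
    have "is_dfao S D \<delta> s0" using d assms(6) by (auto simp: is_dfao_def)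
    moreover have "\<forall>w\<in>lists D. a (wval \<beta> w) = \<tau> (foldl \<delta> s0 w)"
      using c lsub by (meson subsetD)
    ultimately show "automatic \<beta> D a" unfolding automatic_def using he by (intro conjI exI) auto
  qed
qed

end
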